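(* Let $u_t\in\mathbb R^m$, $t=0,1,\dots$, be i.i.d. $\mathcal N(0,I_m)$. For integers $k\ge p\ge1$ define the $mp\times(k-p+1)$ block-Toeplitz matrix $$U=\begin{bmatrix}u_{k-p}&u_{k-p-1}&\cdots&u_0\\ u_{k-p+1}&u_{k-p}&\cdots&u_1\\ \vdots&&&\vdots\\ u_{k-1}&u_{k-2}&\cdots&u_{p-1}\end{bmatrix}.$$ Let $\delta\in(0,1)$. If $k\ge p+128\big(mp^2\log9+p\log2+p\log\frac1\delta\big)$, then with probability at least $1-\delta$, $$\tfrac12(k-p+1)I\preceq UU^*\preceq\tfrac32(k-p+1)I.$$ *)

theory Defs
  imports "HOL-Probability.Probability"
begin

text \<open>Rows are indexed by pairs
  (a, r) with a < p the block-row index and r < m the coordinate; columns by j with j \<le> k - p.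
  Block row a, block column j contains u_(k-p+a-j).\<close>
definition toepU :: "(nat \<Rightarrow> nat \<Rightarrow> real) \<Rightarrow> nat \<Rightarrow> nat \<Rightarrow> nat \<times> nat \<Rightarrow> nat \<Rightarrow> real" where
  "toepU v p k ar j = v (k - p + fst ar - j) (snd ar)"

definition rowIdx :: "nat \<Rightarrow> nat \<Rightarrow> (nat \<times> nat) set" where
  "rowIdx m p = {..<p} \<times> {..<m}"

text \<open>The mp x mp Gram matrix U U^* (U is real, so U^* = U^T).\<close>
definition gramUU :: "(nat \<Rightarrow> nat \<Rightarrow> real) \<Rightarrow> nat \<Rightarrow> nat \<Rightarrow> nat \<times> nat \<Rightarrow> nat \<times> nat \<Rightarrow> real" where
  "gramUU v p k i i' = (\<Sum>j\<in>{0..k-p}. toepU v p k i j * toepU v p k i' j)"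

definition loewner_between :: "('i set) \<Rightarrow> real \<Rightarrow> ('i \<Rightarrow> 'i \<Rightarrow> real) \<Rightarrow> real \<Rightarrow> bool" where
  "loewner_between I c A C \<longleftrightarrow>
     (\<forall>x :: 'i \<Rightarrow> real.
        c * (\<Sum>i\<in>I. (x i)\<^sup>2) \<le> (\<Sum>i\<in>I. \<Sum>i'\<in>I. x i * A i i' * x i') \<and>
        (\<Sum>i\<in>I. \<Sum>i'\<in>I. x i * A i i' * x i') \<le> C * (\<Sum>i\<in>I. (x i)\<^sup>2))"

end

theory Submission
  imports Defs
begin

definition bf :: "('i \<Rightarrow> 'i \<Rightarrow> real) \<Rightarrow> 'i set \<Rightarrow> ('i \<Rightarrow> real) \<Rightarrow> ('i \<Rightarrow> real) \<Rightarrow> real" where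
  "bf A I x y = (\<Sum>i\<in>I. \<Sum>i'\<in>I. x i * A i i' * y i')"

definition nrm :: "'i set \<Rightarrow> ('i \<Rightarrow> real) \<Rightarrow> real" where
  "nrm I x = (\<Sum>i\<in>I. (x i)\<^sup>2)"

lemma nrm_nonneg: "0 \<le> nrm I x" unfolding nrm_def by (simp add: sum_nonneg)

lemma L2_nrm: "L2_set x I = sqrt (nrm I x)" unfolding L2_set_def nrm_def by simp

lemma bf_add_left: "bf A I (\<lambda>i. x i + z i) y = bf A I x y + bf A I z y"
  unfolding bf_def by (simp add: algebra_simps sum.distrib)
lemma bf_sub_left: "bf A I (\<lambda>i. x i - z i) y = bf A I x y - bf A I z y"
  unfolding bf_def by (simp add: algebra_simps sum_subtractf)
lemma bf_add_right: "bf A I x (\<lambda>i. y i + z i) = bf A I x y + bf A I x z"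
  unfolding bf_def by (simp add: algebra_simps sum.distrib)
lemma bf_sub_right: "bf A I x (\<lambda>i. y i - z i) = bf A I x y - bf A I x z"
  unfolding bf_def by (simp add: algebra_simps sum_subtractf)
lemma bf_scale_left: "bf A I (\<lambda>i. c * x i) y = c * bf A I x y"
  unfolding bf_def by (simp add: algebra_simps sum_distrib_left)
lemma bf_scale_right: "bf A I x (\<lambda>i. c * y i) = c * bf A I x y"
  unfolding bf_def by (simp add: algebra_simps sum_distrib_left)
lemma bf_sym:
  assumes "\<And>i i'. i \<in> I \<Longrightarrow> i' \<in> I \<Longrightarrow> A i i' = A i' i"
  shows "bf A I x y = bf A I y x"
  unfolding bf_def
  by (subst sum.swap) (auto intro!: sum.cong simp: assms mult.commute mult.left_commute)
lemma bf_zero_left: "(\<And>i. i \<in> I \<Longrightarrow> x i = 0) \<Longrightarrow> bf A I x y = 0"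
  unfolding bf_def by simp
lemma bf_zero_right: "(\<And>i. i \<in> I \<Longrightarrow> y i = 0) \<Longrightarrow> bf A I x y = 0"
  unfolding bf_def by simp

lemma nrm_zero: "finite I \<Longrightarrow> nrm I x = 0 \<Longrightarrow> i \<in> I \<Longrightarrow> x i = 0"
  unfolding nrm_def by (simp add: sum_nonneg_eq_0_iff)

lemma nrm_scale: "nrm I (\<lambda>i. c * x i) = c\<^sup>2 * nrm I x"
  unfolding nrm_def by (simp add: power_mult_distrib sum_distrib_left)

lemma nrm_parallel: "nrm I (\<lambda>i. a i + b i) + nrm I (\<lambda>i. a i - b i) = 2 * nrm I a + 2 * nrm I b"
  unfolding nrm_def sum_distrib_left sum.distrib[symmetric]
  by (rule sum.cong) (simp_all add: power2_eq_square algebra_simps)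

lemma net_lemma:
  fixes A :: "'i \<Rightarrow> 'i \<Rightarrow> real" and S :: "('i \<Rightarrow> real) set"
  assumes fin: "finite I"
    and symA: "\<And>i i'. i \<in> I \<Longrightarrow> i' \<in> I \<Longrightarrow> A i i' = A i' i"
    and eps: "0 < \<epsilon>" "0 < 1 - 2*\<epsilon> - \<epsilon>\<^sup>2"
    and net: "\<And>x. nrm I x \<le> 1 \<Longrightarrow> \<exists>y\<in>S. nrm I (\<lambda>i. x i - y i) \<le> \<epsilon>\<^sup>2 \<and> nrm I y \<le> (1+\<epsilon>)\<^sup>2"
    and bnd: "\<And>y. y \<in> S \<Longrightarrow> \<bar>bf A I y y\<bar> \<le> T"
  shows "\<bar>bf A I x x\<bar> \<le> T / (1 - 2*\<epsilon> - \<epsilon>\<^sup>2) * nrm I x"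
proof -
  define B where "B = {x. nrm I x \<le> 1}"
  define Mx where "Mx = Sup ((\<lambda>x. \<bar>bf A I x x\<bar>) ` B)"
  have bdd: "bdd_above ((\<lambda>x. \<bar>bf A I x x\<bar>) ` B)"
  proof (rule bdd_aboveI2)
    fix x assume "x \<in> B"
    then have xb: "\<bar>x i\<bar> \<le> 1" if "i \<in> I" for i
    proof -
      have "(x i)\<^sup>2 \<le> nrm I x" unfolding nrm_def
        by (rule member_le_sum) (use that fin in auto)
      also have "\<dots> \<le> 1" using \<open>x \<in> B\<close> by (simp add: B_def)
      finally show ?thesis by (simp add: abs_square_le_1)
    qed
    have "\<bar>bf A I x x\<bar> \<le> (\<Sum>i\<in>I. \<Sum>i'\<in>I. \<bar>x i * A i i' * x i'\<bar>)"
      unfolding bf_def by (rule order.trans[OF sum_abs]) (intro sum_mono sum_abs)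
    also have "\<dots> \<le> (\<Sum>i\<in>I. \<Sum>i'\<in>I. \<bar>A i i'\<bar>)"
    proof (intro sum_mono)
      fix i i' assume "i \<in> I" "i' \<in> I"
      then show "\<bar>x i * A i i' * x i'\<bar> \<le> \<bar>A i i'\<bar>"
      proof -
        have "\<bar>x i\<bar> * \<bar>A i i'\<bar> \<le> 1 * \<bar>A i i'\<bar>" using xb[OF \<open>i \<in> I\<close>] by (intro mult_right_mono) auto
        then have "\<bar>x i\<bar> * \<bar>A i i'\<bar> * \<bar>x i'\<bar> \<le> \<bar>A i i'\<bar> * 1"
          using xb[OF \<open>i' \<in> I\<close>] by (intro mult_mono) auto
        then show ?thesis by (simp add: abs_mult)
      qed
    qed
    finally show "\<bar>bf A I x x\<bar> \<le> (\<Sum>i\<in>I. \<Sum>i'\<in>I. \<bar>A i i'\<bar>)" .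
  qed
  have zB: "(\<lambda>i. 0) \<in> B" by (simp add: B_def nrm_def)
  have Mx_upper: "\<bar>bf A I x x\<bar> \<le> Mx" if "x \<in> B" for x
    unfolding Mx_def by (rule cSup_upper) (use that bdd in auto)
  have Mx0: "0 \<le> Mx" using Mx_upper[OF zB] by simp
  have hom: "\<bar>bf A I v v\<bar> \<le> Mx * nrm I v" for v
  proof (cases "nrm I v = 0")
    case True
    then have "bf A I v v = 0" by (intro bf_zero_left) (use nrm_zero[OF fin] in auto)
    then show ?thesis using True by simp
  next
    case False
    then have pos: "0 < nrm I v" using nrm_nonneg[of I v] by simp
    define s where "s = sqrt (nrm I v)"
    have s: "0 < s" "s\<^sup>2 = nrm I v" using pos by (auto simp: s_def)
    define w where "w = (\<lambda>i. v i / s)"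
    have vw: "v = (\<lambda>i. s * w i)" using s by (auto simp: w_def)
    have "nrm I v = s\<^sup>2 * nrm I w" by (subst vw) (rule nrm_scale)
    then have "nrm I w = 1" using s pos by simp
    then have "w \<in> B" by (simp add: B_def)
    have "bf A I v v = s\<^sup>2 * bf A I w w"
      by (subst (1 2) vw) (simp add: bf_scale_left bf_scale_right power2_eq_square)
    then have "\<bar>bf A I v v\<bar> = nrm I v * \<bar>bf A I w w\<bar>" using s pos by (simp add: abs_mult)
    also have "\<dots> \<le> nrm I v * Mx" using Mx_upper[OF \<open>w \<in> B\<close>] pos by (intro mult_left_mono) auto
    finally show ?thesis by (simp add: mult.commute)
  qed
  have polar0: "4 * \<bar>bf A I a b\<bar> \<le> 2 * Mx * (nrm I a + nrm I b)" for a b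
  proof -
    have "4 * bf A I a b = bf A I (\<lambda>i. a i + b i) (\<lambda>i. a i + b i) - bf A I (\<lambda>i. a i - b i) (\<lambda>i. a i - b i)"
      using bf_sym[OF symA, where x=a and y=b]
      by (simp add: bf_add_left bf_add_right bf_sub_left bf_sub_right)
    then have "4 * \<bar>bf A I a b\<bar> \<le> \<bar>bf A I (\<lambda>i. a i + b i) (\<lambda>i. a i + b i)\<bar> + \<bar>bf A I (\<lambda>i. a i - b i) (\<lambda>i. a i - b i)\<bar>"
      by linarith
    also have "\<dots> \<le> Mx * nrm I (\<lambda>i. a i + b i) + Mx * nrm I (\<lambda>i. a i - b i)"
      by (intro add_mono hom)
    also have "\<dots> = 2 * Mx * (nrm I a + nrm I b)"
      using nrm_parallel[where I=I and a=a and b=b] by (simp add: algebra_simps) (metis distrib_left mult.assoc)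
    finally show ?thesis .
  qed
  have polar: "\<bar>bf A I a b\<bar> \<le> Mx * sqrt (nrm I a) * sqrt (nrm I b)" for a b
  proof (cases "nrm I a = 0 \<or> nrm I b = 0")
    case True
    then have "bf A I a b = 0"
      by (auto intro: bf_zero_left bf_zero_right dest: nrm_zero[OF fin])
    then show ?thesis using Mx0 nrm_nonneg[of I a] nrm_nonneg[of I b] by simp
  next
    case False
    then have pa: "0 < nrm I a" and pb: "0 < nrm I b" using nrm_nonneg[of I a] nrm_nonneg[of I b] by auto
    define la where "la = sqrt (nrm I a)"
    define lb where "lb = sqrt (nrm I b)"
    have la: "0 < la" "la\<^sup>2 = nrm I a" using pa by (auto simp: la_def)
    have lb: "0 < lb" "lb\<^sup>2 = nrm I b" using pb by (auto simp: lb_def)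
    define c where "c = sqrt (lb / la)"
    have c: "0 < c" "c\<^sup>2 = lb / la" using la lb by (auto simp: c_def)
    have e1: "bf A I (\<lambda>i. c * a i) (\<lambda>i. (1/c) * b i) = bf A I a b"
      unfolding bf_scale_left bf_scale_right using c by simp
    have "nrm I (\<lambda>i. c * a i) = c\<^sup>2 * la\<^sup>2" by (simp add: nrm_scale la(2))
    also have "\<dots> = la * lb" using c(2) la(1) by (simp add: power2_eq_square field_simps)
    finally have e2: "nrm I (\<lambda>i. c * a i) = la * lb" .
    have "nrm I (\<lambda>i. (1/c) * b i) = (1/c)\<^sup>2 * lb\<^sup>2" by (simp only: nrm_scale lb(2))
    also have "\<dots> = la * lb" using c lb(1) la(1) by (simp add: power2_eq_square power_divide field_simps)
    finally have e3: "nrm I (\<lambda>i. (1/c) * b i) = la * lb" .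
    have "4 * \<bar>bf A I a b\<bar> \<le> 2 * Mx * (la * lb + la * lb)"
      using polar0[of "\<lambda>i. c * a i" "\<lambda>i. (1/c) * b i"] e1 e2 e3 by simp
    then show ?thesis by (simp add: la_def lb_def)
  qed
  have sqle: "sqrt (nrm I z) \<le> r" if "nrm I z \<le> r\<^sup>2" "0 \<le> r" for z r
    using that real_sqrt_le_iff[of "nrm I z" "r\<^sup>2"] by simp
  have step: "\<bar>bf A I x x\<bar> \<le> T + Mx * (\<epsilon> * (2 + \<epsilon>))" if "x \<in> B" for x
  proof -
    from that have x1: "nrm I x \<le> 1" by (simp add: B_def)
    from net[OF x1] obtain y where y: "y \<in> S" "nrm I (\<lambda>i. x i - y i) \<le> \<epsilon>\<^sup>2" "nrm I y \<le> (1+\<epsilon>)\<^sup>2" by blast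
    have "bf A I x x = bf A I y y + bf A I (\<lambda>i. x i - y i) (\<lambda>i. x i + y i)"
      using bf_sym[OF symA, where x=x and y=y]
      by (simp add: bf_add_left bf_add_right bf_sub_left bf_sub_right)
    then have "\<bar>bf A I x x\<bar> \<le> \<bar>bf A I y y\<bar> + \<bar>bf A I (\<lambda>i. x i - y i) (\<lambda>i. x i + y i)\<bar>" by linarith
    also have "\<dots> \<le> T + Mx * sqrt (nrm I (\<lambda>i. x i - y i)) * sqrt (nrm I (\<lambda>i. x i + y i))"
      by (intro add_mono bnd y polar)
    also have "\<dots> \<le> T + Mx * \<epsilon> * (2 + \<epsilon>)"
    proof -
      have a1: "sqrt (nrm I (\<lambda>i. x i - y i)) \<le> \<epsilon>" using sqle[OF y(2)] eps by simp
      have "sqrt (nrm I (\<lambda>i. x i + y i)) \<le> sqrt (nrm I x) + sqrt (nrm I y)"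
        using L2_set_triangle_ineq[of x y I] by (simp add: L2_nrm)
      also have "\<dots> \<le> 1 + (1 + \<epsilon>)" using sqle[OF _ , of x 1] x1 sqle[OF y(3)] eps by (intro add_mono) auto
      finally have a2: "sqrt (nrm I (\<lambda>i. x i + y i)) \<le> 2 + \<epsilon>" by simp
      have "Mx * sqrt (nrm I (\<lambda>i. x i - y i)) * sqrt (nrm I (\<lambda>i. x i + y i)) \<le> Mx * \<epsilon> * (2 + \<epsilon>)"
        using a1 a2 Mx0 eps by (intro mult_mono) (auto intro: mult_left_mono nrm_nonneg)
      then show ?thesis by simp
    qed
    finally show ?thesis by (simp add: mult.assoc)
  qed
  have "Mx \<le> T + Mx * (\<epsilon> * (2 + \<epsilon>))"
    unfolding Mx_def[of] apply (subst (1) Mx_def[symmetric])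
    unfolding Mx_def by (rule cSup_least) (use zB step[unfolded Mx_def] in auto)
  then have "Mx * (1 - 2*\<epsilon> - \<epsilon>\<^sup>2) \<le> T" by (simp add: algebra_simps power2_eq_square)
  then have MT: "Mx \<le> T / (1 - 2*\<epsilon> - \<epsilon>\<^sup>2)" using eps by (simp add: pos_le_divide_eq)
  show ?thesis using hom[of x] MT nrm_nonneg[of I x]
    by (meson mult_right_mono order.trans)
qed

lemma geo_sym_sum: "(\<Sum>a\<in>{-int K..int K}. (4/5::real) ^ nat \<bar>a\<bar>) = 9 - 8 * (4/5) ^ K"
proof (induction K)
  case 0 then show ?case by simp
next
  case (Suc K)
  have e: "{-int (Suc K)..int (Suc K)} = insert (int (Suc K)) (insert (- int (Suc K)) {-int K..int K})"
    by auto
  have "(\<Sum>a\<in>{-int (Suc K)..int (Suc K)}. (4/5::real) ^ nat \<bar>a\<bar>)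
      = (4/5) ^ nat \<bar>int (Suc K)\<bar> + ((4/5) ^ nat \<bar>- int (Suc K)\<bar> + (\<Sum>a\<in>{-int K..int K}. (4/5::real) ^ nat \<bar>a\<bar>))"
    unfolding e by (subst sum.insert, simp, simp)+ rule
  moreover have "nat \<bar>int (Suc K)\<bar> = Suc K" "nat \<bar>- int (Suc K)\<bar> = Suc K" by auto
  ultimately show ?case using Suc by simp
qed

lemma geo_sym_sum_le: "(\<Sum>a\<in>{-int K..int K}. (4/5::real) ^ nat \<bar>a\<bar>) \<le> 9"
  unfolding geo_sym_sum by simp

lemma net_exists:
  fixes I :: "'i set"
  assumes fin: "finite I" and n: "card I = n" "1 \<le> n"
  shows "\<exists>S. finite S \<and> real (card S) \<le> 28 ^ n \<and>
    (\<forall>x. nrm I x \<le> 1 \<longrightarrow> (\<exists>y\<in>S. nrm I (\<lambda>i. x i - y i) \<le> (1/9)\<^sup>2 \<and> nrm I y \<le> (1+1/9)\<^sup>2))"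
proof -
  define h :: real where "h = 2 / (9 * sqrt n)"
  have hpos: "0 < h" using n by (simp add: h_def)
  have h2: "h\<^sup>2 * n = 4/81" using n by (simp add: h_def power2_eq_square field_simps)
  define K :: nat where "K = 5 * n"
  define F where "F = (\<lambda>_::'i. {-int K..int K})"
  define Z where "Z = {z \<in> PiE I F. (\<Sum>i\<in>I. nat \<bar>z i\<bar>) \<le> 5 * n}"
  define emb where "emb = (\<lambda>z::'i \<Rightarrow> int. \<lambda>i. if i \<in> I then h * of_int (z i) else 0)"
  define S where "S = emb ` Z"
  have finZ: "finite Z" unfolding Z_def F_def using fin by (auto intro!: finite_PiE)
  have "real (card Z) = (\<Sum>z\<in>Z. 1)" by simp
  also have "\<dots> \<le> (\<Sum>z\<in>Z. (5/4) ^ (5*n) * (4/5::real) ^ (\<Sum>i\<in>I. nat \<bar>z i\<bar>))"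
  proof (rule sum_mono)
    fix z assume "z \<in> Z"
    then have "(4/5::real) ^ (5*n) \<le> (4/5) ^ (\<Sum>i\<in>I. nat \<bar>z i\<bar>)"
      by (intro power_decreasing) (auto simp: Z_def)
    then have "(5/4::real) ^ (5*n) * (4/5) ^ (5*n) \<le> (5/4) ^ (5*n) * (4/5) ^ (\<Sum>i\<in>I. nat \<bar>z i\<bar>)"
      by (intro mult_left_mono) auto
    moreover have "(5/4::real) ^ (5*n) * (4/5) ^ (5*n) = 1"
      by (simp flip: power_mult_distrib)
    ultimately show "1 \<le> (5/4) ^ (5*n) * (4/5::real) ^ (\<Sum>i\<in>I. nat \<bar>z i\<bar>)" by simp
  qed
  also have "\<dots> \<le> (\<Sum>z\<in>PiE I F. (5/4) ^ (5*n) * (4/5::real) ^ (\<Sum>i\<in>I. nat \<bar>z i\<bar>))"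
    by (rule sum_mono2) (use fin in \<open>auto simp: Z_def F_def intro!: finite_PiE\<close>)
  also have "\<dots> = (5/4) ^ (5*n) * (\<Prod>i\<in>I. \<Sum>a\<in>F i. (4/5::real) ^ nat \<bar>a\<bar>)"
    by (subst prod_sum_PiE) (auto simp: fin F_def sum_distrib_left power_sum)
  also have "\<dots> \<le> (5/4) ^ (5*n) * (\<Prod>i\<in>I. (9::real))"
    by (intro mult_left_mono prod_mono) (auto simp: F_def geo_sym_sum_le intro: sum_nonneg)
  also have "\<dots> = ((5/4) ^ 5 * 9) ^ n" using n by (simp add: power_mult power_mult_distrib)
  also have "\<dots> \<le> 28 ^ n" by (intro power_mono) (auto simp: power_divide)
  finally have cardZ: "real (card Z) \<le> 28 ^ n" .
  have "card S \<le> card Z" unfolding S_def by (rule card_image_le[OF finZ])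
  then have cardS: "real (card S) \<le> 28 ^ n" using cardZ by linarith
  have netp: "\<exists>y\<in>S. nrm I (\<lambda>i. x i - y i) \<le> (1/9)\<^sup>2 \<and> nrm I y \<le> (1+1/9)\<^sup>2" if x1: "nrm I x \<le> 1" for x
  proof -
    define z where "z = restrict (\<lambda>i. round (x i / h)) I"
    define y where "y = emb z"
    have dev: "\<bar>x i - y i\<bar> \<le> h / 2" if "i \<in> I" for i
    proof -
      have "\<bar>of_int (round (x i / h)) - x i / h\<bar> \<le> 1/2" by (rule of_int_round_abs_le)
      then have "h * \<bar>of_int (round (x i / h)) - x i / h\<bar> \<le> h * (1/2)" using hpos by (intro mult_left_mono) auto
      moreover have "h * \<bar>of_int (round (x i / h)) - x i / h\<bar> = \<bar>x i - h * of_int (round (x i / h))\<bar>"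
      proof -
        have "x i - h * of_int (round (x i / h)) = h * (x i / h - of_int (round (x i / h)))"
          using hpos by (simp add: field_simps)
        then show ?thesis using hpos by (simp add: abs_mult abs_minus_commute)
      qed
      ultimately show ?thesis using that by (simp add: y_def emb_def z_def)
    qed
    have "nrm I (\<lambda>i. x i - y i) \<le> (\<Sum>i\<in>I. (h/2)\<^sup>2)" unfolding nrm_def
    proof (intro sum_mono)
      fix i assume "i \<in> I"
      have "\<bar>x i - y i\<bar> \<le> \<bar>h / 2\<bar>" using dev[OF \<open>i \<in> I\<close>] hpos by simp
      then show "(x i - y i)\<^sup>2 \<le> (h / 2)\<^sup>2" by (simp only: abs_le_square_iff)
    qed
    also have "\<dots> = (1/9)\<^sup>2" using h2 n by (simp add: power_divide algebra_simps)
    finally have d1: "nrm I (\<lambda>i. x i - y i) \<le> (1/9)\<^sup>2" .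
    have sqle: "sqrt (nrm I w) \<le> r" if "nrm I w \<le> r\<^sup>2" "0 \<le> r" for w r
      using that real_sqrt_le_iff[of "nrm I w" "r\<^sup>2"] by simp
    have "sqrt (nrm I y) \<le> sqrt (nrm I x) + sqrt (nrm I (\<lambda>i. y i - x i))"
      using L2_set_triangle_ineq[of x "\<lambda>i. y i - x i" I] by (simp add: L2_nrm)
    also have "nrm I (\<lambda>i. y i - x i) = nrm I (\<lambda>i. x i - y i)"
      unfolding nrm_def by (simp add: power2_commute)
    also have "sqrt (nrm I x) + sqrt (nrm I (\<lambda>i. x i - y i)) \<le> 1 + 1/9"
      using sqle[of x 1] x1 sqle[OF d1] by (intro add_mono) auto
    finally have "sqrt (nrm I y) \<le> 1 + 1/9" .
    then have ny: "nrm I y \<le> (1+1/9)\<^sup>2"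
      using real_sqrt_le_iff[of "nrm I y" "(1+1/9)\<^sup>2"] by simp
    have "nrm I y = h\<^sup>2 * (\<Sum>i\<in>I. (of_int (z i))\<^sup>2)"
      unfolding nrm_def y_def emb_def by (simp add: power_mult_distrib sum_distrib_left)
    then have "h\<^sup>2 * (\<Sum>i\<in>I. (real_of_int (z i))\<^sup>2) \<le> (10/9)\<^sup>2" using ny by simp
    then have "h\<^sup>2 * (\<Sum>i\<in>I. (real_of_int (z i))\<^sup>2) * n \<le> (10/9)\<^sup>2 * n"
      by (intro mult_right_mono) auto
    then have "h\<^sup>2 * n * (\<Sum>i\<in>I. (real_of_int (z i))\<^sup>2) \<le> (10/9)\<^sup>2 * n"
      by (simp add: ac_simps)
    then have sq: "(\<Sum>i\<in>I. (real_of_int (z i))\<^sup>2) \<le> 25 * n" unfolding h2 by (simp add: power2_eq_square)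
    have "10 * (\<Sum>i\<in>I. real (nat \<bar>z i\<bar>)) \<le> (\<Sum>i\<in>I. (real_of_int (z i))\<^sup>2 + 25)"
      unfolding sum_distrib_left
    proof (intro sum_mono)
      fix i
      have "0 \<le> (\<bar>real_of_int (z i)\<bar> - 5)\<^sup>2" by simp
      then show "10 * real (nat \<bar>z i\<bar>) \<le> (real_of_int (z i))\<^sup>2 + 25"
        by (simp add: power2_eq_square algebra_simps)
    qed
    also have "\<dots> \<le> 25 * n + 25 * n" using sq n by (simp add: sum.distrib)
    finally have "(\<Sum>i\<in>I. real (nat \<bar>z i\<bar>)) \<le> 5 * n" by simp
    then have "real (\<Sum>i\<in>I. nat \<bar>z i\<bar>) \<le> real (5 * n)" by simp
    then have sabs: "(\<Sum>i\<in>I. nat \<bar>z i\<bar>) \<le> 5 * n" by (simp only: of_nat_le_iff)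
    have "z \<in> Z"
    proof -
      have "nat \<bar>z i\<bar> \<le> K" if "i \<in> I" for i
        using member_le_sum[of i I "\<lambda>i. nat \<bar>z i\<bar>"] that fin sabs by (simp add: K_def)
      then have "\<bar>z i\<bar> \<le> int K" if "i \<in> I" for i using that by fastforce
      then have "z \<in> PiE I F" unfolding z_def F_def
        by (auto simp: abs_le_iff) (metis minus_le_iff)
      then show ?thesis using sabs by (simp add: Z_def)
    qed
    then have "y \<in> S" by (simp add: S_def y_def)
    then show ?thesis using d1 ny by blast
  qed
  show ?thesis
    by (rule exI[of _ S]) (use finZ cardS netp in \<open>auto simp: S_def\<close>)
qed

lemma nn_integral_normal_density: "0 < \<sigma> \<Longrightarrow> (\<integral>\<^sup>+x. ennreal (normal_density \<mu> \<sigma> x) \<partial>lborel) = 1"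
  by (subst nn_integral_eq_integral) (auto simp: normal_density_nonneg integrable_normal_density integral_normal_density)

lemma gauss_mgf:
  fixes s :: real assumes s: "s < 1/2"
  shows "(\<integral>\<^sup>+x. ennreal (std_normal_density x) * ennreal (exp (s * x\<^sup>2)) \<partial>lborel) = ennreal (1 / sqrt (1 - 2 * s))"
proof -
  define \<tau> where "\<tau> = 1 / sqrt (1 - 2 * s)"
  have tp: "0 < \<tau>" using s by (simp add: \<tau>_def)
  have t2: "\<tau>\<^sup>2 = 1 / (1 - 2 * s)" using s by (simp add: \<tau>_def power_divide)
  have pw: "std_normal_density x * exp (s * x\<^sup>2) = \<tau> * normal_density 0 \<tau> x" for x
  proof -
    have "sqrt (2 * pi * \<tau>\<^sup>2) = sqrt (2*pi) * \<tau>" using tp by (simp add: real_sqrt_mult)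
    moreover have "- x\<^sup>2 / 2 + s * x\<^sup>2 = - (x - 0)\<^sup>2 / (2 * \<tau>\<^sup>2)"
      using s by (simp add: t2 field_simps)
    ultimately show ?thesis
      using tp by (simp add: std_normal_density_def normal_density_def exp_add[symmetric] field_simps)
  qed
  have "(\<integral>\<^sup>+x. ennreal (std_normal_density x) * ennreal (exp (s * x\<^sup>2)) \<partial>lborel)
      = (\<integral>\<^sup>+x. ennreal \<tau> * ennreal (normal_density 0 \<tau> x) \<partial>lborel)"
    by (intro nn_integral_cong) (use tp in \<open>simp add: pw[symmetric] ennreal_mult'[symmetric]\<close>)
  also have "\<dots> = ennreal \<tau>"
    by (subst nn_integral_cmult) (auto simp: nn_integral_normal_density[OF tp])
  finally show ?thesis by (simp add: \<tau>_def)
qed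

lemma (in prob_space) sq_mgf:
  assumes fin: "finite J" and ind: "indep_vars (\<lambda>_. borel) W J"
    and dist: "\<And>j. j \<in> J \<Longrightarrow> distributed M lborel (W j) std_normal_density"
    and s: "s < 1/2"
  shows "(\<integral>\<^sup>+\<omega>. ennreal (exp (s * (\<Sum>j\<in>J. (W j \<omega>)\<^sup>2))) \<partial>M) = ennreal ((1 / sqrt (1 - 2 * s)) ^ card J)"
proof -
  have "(\<integral>\<^sup>+\<omega>. ennreal (exp (s * (\<Sum>j\<in>J. (W j \<omega>)\<^sup>2))) \<partial>M)
      = (\<integral>\<^sup>+\<omega>. (\<Prod>j\<in>J. ennreal (exp (s * (W j \<omega>)\<^sup>2))) \<partial>M)"
    by (intro nn_integral_cong) (simp add: sum_distrib_left exp_sum fin prod_ennreal)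
  also have "\<dots> = (\<Prod>j\<in>J. \<integral>\<^sup>+\<omega>. ennreal (exp (s * (W j \<omega>)\<^sup>2)) \<partial>M)"
    by (intro indep_vars_nn_integral fin indep_vars_compose2[OF ind]) auto
  also have "\<dots> = (\<Prod>j\<in>J. ennreal (1 / sqrt (1 - 2 * s)))"
  proof (intro prod.cong refl)
    fix j assume "j \<in> J"
    have "(\<integral>\<^sup>+\<omega>. ennreal (exp (s * (W j \<omega>)\<^sup>2)) \<partial>M)
        = (\<integral>\<^sup>+x. ennreal (std_normal_density x) * ennreal (exp (s * x\<^sup>2)) \<partial>lborel)"
      by (rule distributed_nn_integral[OF dist[OF \<open>j \<in> J\<close>], symmetric]) simp
    also have "\<dots> = ennreal (1 / sqrt (1 - 2 * s))" by (rule gauss_mgf[OF s])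
    finally show "(\<integral>\<^sup>+\<omega>. ennreal (exp (s * (W j \<omega>)\<^sup>2)) \<partial>M) = ennreal (1 / sqrt (1 - 2 * s))" .
  qed
  also have "\<dots> = ennreal ((1 / sqrt (1 - 2 * s)) ^ card J)"
    by (subst ennreal_power[symmetric]) (use s in auto)
  finally show ?thesis .
qed

lemma (in prob_space) chi_upper:
  assumes fin: "finite J" and ind: "indep_vars (\<lambda>_. borel) W J"
    and dist: "\<And>j. j \<in> J \<Longrightarrow> distributed M lborel (W j) std_normal_density"
  shows "prob {\<omega>\<in>space M. 13/10 * real (card J) \<le> (\<Sum>j\<in>J. (W j \<omega>)\<^sup>2)} \<le> exp (- real (card J) / 64)"
proof -
  have rv[measurable]: "\<And>j. j \<in> J \<Longrightarrow> W j \<in> borel_measurable M"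
    using ind by (auto simp: indep_vars_def)
  have meas[measurable]: "(\<lambda>\<omega>. \<Sum>j\<in>J. (W j \<omega>)\<^sup>2) \<in> borel_measurable M"
    by (intro borel_measurable_sum borel_measurable_power rv)
  define s :: real where "s = 3/26"
  have "ennreal (prob {\<omega>\<in>space M. 13/10 * real (card J) \<le> (\<Sum>j\<in>J. (W j \<omega>)\<^sup>2)})
      = emeasure M {\<omega>\<in>space M. 13/10 * real (card J) \<le> (\<Sum>j\<in>J. (W j \<omega>)\<^sup>2)}"
    by (simp add: emeasure_eq_measure)
  also have "\<dots> \<le> ennreal (exp (- s * (13/10 * real (card J)))) *
      (\<integral>\<^sup>+\<omega>. ennreal (exp (s * (\<Sum>j\<in>J. (W j \<omega>)\<^sup>2))) * indicator (space M) \<omega> \<partial>M)"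
    by (intro Chernoff_ineq_nn_integral_ge) (auto simp: s_def)
  also have "(\<integral>\<^sup>+\<omega>. ennreal (exp (s * (\<Sum>j\<in>J. (W j \<omega>)\<^sup>2))) * indicator (space M) \<omega> \<partial>M)
      = (\<integral>\<^sup>+\<omega>. ennreal (exp (s * (\<Sum>j\<in>J. (W j \<omega>)\<^sup>2))) \<partial>M)"
    by (intro nn_integral_cong) auto
  also have "\<dots> = ennreal ((1 / sqrt (1 - 2 * s)) ^ card J)"
    by (rule sq_mgf[OF fin ind dist]) (auto simp: s_def)
  also have "ennreal (exp (- s * (13/10 * real (card J)))) * ennreal ((1 / sqrt (1 - 2 * s)) ^ card J)
      = ennreal ((exp (- 3/20) * sqrt (13/10)) ^ card J)"
  proof -
    have "exp (- s * (13/10 * real (card J))) = exp (- 3/20) ^ card J"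
      by (simp add: s_def exp_of_nat_mult[symmetric] algebra_simps)
    moreover have "1 / sqrt (1 - 2 * s) = sqrt (13/10)"
      by (simp add: s_def real_sqrt_divide)
    ultimately show ?thesis by (simp add: ennreal_mult'[symmetric] power_mult_distrib)
  qed
  also have "\<dots> \<le> ennreal (exp (- 1/64) ^ card J)"
  proof (intro ennreal_leI power_mono)
    have "13/10 \<le> exp (43/160::real)"
      using exp_lower_Taylor_quadratic[of "43/160::real"] by (simp add: power2_eq_square)
    also have "exp (43/160::real) = (exp (43/320))\<^sup>2" by (simp add: power2_eq_square exp_add[symmetric])
    finally have "sqrt (13/10) \<le> sqrt ((exp (43/320::real))\<^sup>2)"
      by (rule real_sqrt_le_mono)
    then have "sqrt (13/10) \<le> exp (43/320::real)" by simp
    then have "exp (- 3/20) * sqrt (13/10) \<le> exp (- 3/20) * exp (43/320::real)"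
      by (intro mult_left_mono) auto
    also have "\<dots> = exp (- 1/64)" by (simp add: exp_add[symmetric])
    finally show "exp (- 3/20) * sqrt (13/10) \<le> exp (- 1/64::real)" .
  qed auto
  also have "exp (- 1/64) ^ card J = exp (- real (card J) / 64)"
    by (simp add: exp_of_nat_mult[symmetric])
  finally show ?thesis by (subst (asm) ennreal_le_iff) auto
qed

lemma (in prob_space) chi_lower:
  assumes fin: "finite J" and ind: "indep_vars (\<lambda>_. borel) W J"
    and dist: "\<And>j. j \<in> J \<Longrightarrow> distributed M lborel (W j) std_normal_density"
  shows "prob {\<omega>\<in>space M. (\<Sum>j\<in>J. (W j \<omega>)\<^sup>2) \<le> 7/10 * real (card J)} \<le> exp (- real (card J) / 64)"
proof -
  have rv[measurable]: "\<And>j. j \<in> J \<Longrightarrow> W j \<in> borel_measurable M"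
    using ind by (auto simp: indep_vars_def)
  have meas[measurable]: "(\<lambda>\<omega>. - (\<Sum>j\<in>J. (W j \<omega>)\<^sup>2)) \<in> borel_measurable M"
    by (intro borel_measurable_uminus borel_measurable_sum borel_measurable_power rv)
  define s :: real where "s = 1/8"
  have eqset: "{\<omega>\<in>space M. (\<Sum>j\<in>J. (W j \<omega>)\<^sup>2) \<le> 7/10 * real (card J)}
     = {\<omega>\<in>space M. - (7/10 * real (card J)) \<le> - (\<Sum>j\<in>J. (W j \<omega>)\<^sup>2)}" by auto
  have "ennreal (prob {\<omega>\<in>space M. (\<Sum>j\<in>J. (W j \<omega>)\<^sup>2) \<le> 7/10 * real (card J)})
      = emeasure M {\<omega>\<in>space M. - (7/10 * real (card J)) \<le> - (\<Sum>j\<in>J. (W j \<omega>)\<^sup>2)}"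
    unfolding eqset by (simp add: emeasure_eq_measure)
  also have "\<dots> \<le> ennreal (exp (- s * (- (7/10 * real (card J))))) *
      (\<integral>\<^sup>+\<omega>. ennreal (exp (s * (- (\<Sum>j\<in>J. (W j \<omega>)\<^sup>2)))) * indicator (space M) \<omega> \<partial>M)"
    by (intro Chernoff_ineq_nn_integral_ge) (auto simp: s_def)
  also have "(\<integral>\<^sup>+\<omega>. ennreal (exp (s * (- (\<Sum>j\<in>J. (W j \<omega>)\<^sup>2)))) * indicator (space M) \<omega> \<partial>M)
      = (\<integral>\<^sup>+\<omega>. ennreal (exp ((- s) * (\<Sum>j\<in>J. (W j \<omega>)\<^sup>2))) \<partial>M)"
    by (intro nn_integral_cong) auto
  also have "\<dots> = ennreal ((1 / sqrt (1 - 2 * (- s))) ^ card J)"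
    by (rule sq_mgf[OF fin ind dist]) (auto simp: s_def)
  also have "ennreal (exp (- s * (- (7/10 * real (card J))))) * ennreal ((1 / sqrt (1 - 2 * (- s))) ^ card J)
      = ennreal ((exp (7/80) * sqrt (4/5)) ^ card J)"
  proof -
    have "exp (- s * (- (7/10 * real (card J)))) = exp (7/80) ^ card J"
      by (simp add: s_def exp_of_nat_mult[symmetric] algebra_simps)
    moreover have "1 / sqrt (1 - 2 * (- s)) = sqrt (4/5)"
      by (simp add: s_def real_sqrt_divide)
    ultimately show ?thesis by (simp add: ennreal_mult'[symmetric] power_mult_distrib)
  qed
  also have "\<dots> \<le> ennreal (exp (- 1/64) ^ card J)"
  proof (intro ennreal_leI power_mono)
    have "exp (66/320::real) \<le> 1 + 66/320 + (66/320)\<^sup>2"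
      by (rule exp_bound) auto
    also have "\<dots> \<le> 5/4" by (simp add: power2_eq_square)
    finally have "exp (66/320::real) \<le> 5/4" .
    then have "4/5 \<le> exp (- 66/320::real)" by (simp add: exp_minus field_simps)
    also have "exp (- 66/320::real) = (exp (- 33/320))\<^sup>2" by (simp add: power2_eq_square exp_add[symmetric])
    finally have "sqrt (4/5) \<le> sqrt ((exp (- 33/320::real))\<^sup>2)"
      by (rule real_sqrt_le_mono)
    then have "sqrt (4/5) \<le> exp (- 33/320::real)" by simp
    then have "exp (7/80) * sqrt (4/5) \<le> exp (7/80) * exp (- 33/320::real)"
      by (intro mult_left_mono) auto
    also have "\<dots> = exp (- 1/64)" by (simp add: exp_add[symmetric])
    finally show "exp (7/80) * sqrt (4/5) \<le> exp (- 1/64::real)" .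
  qed auto
  also have "exp (- 1/64) ^ card J = exp (- real (card J) / 64)"
    by (simp add: exp_of_nat_mult[symmetric])
  finally show ?thesis by (subst (asm) ennreal_le_iff) auto
qed

lemma (in prob_space) indep_group:
  assumes ind: "indep_vars (\<lambda>_. borel) X I0"
    and K: "\<And>l. l \<in> L \<Longrightarrow> K l \<subseteq> I0" and dj: "disjoint_family_on K L"
    and F: "\<And>l. l \<in> L \<Longrightarrow> F l \<in> borel_measurable (PiM (K l) (\<lambda>_. borel))"
    and Z: "\<And>l \<omega>. l \<in> L \<Longrightarrow> Z l \<omega> = F l (restrict (\<lambda>i. X i \<omega>) (K l))"
  shows "indep_vars (\<lambda>_. borel) Z L"
proof -
  have "indep_vars (\<lambda>j. PiM (K j) (\<lambda>_. borel)) (\<lambda>j \<omega>. restrict (\<lambda>i. X i \<omega>) (K j)) L"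
    by (rule indep_vars_restrict[OF ind K dj])
  then have "indep_vars (\<lambda>_. borel) (\<lambda>l \<omega>. F l (restrict (\<lambda>i. X i \<omega>) (K l))) L"
    by (rule indep_vars_compose2) (rule F)
  then show ?thesis
    by (rule indep_vars_cong[THEN iffD1, rotated -1]) (auto simp: Z fun_eq_iff)
qed

lemma (in prob_space) lincomb_normal:
  fixes y :: "'i \<Rightarrow> real" and g :: "'i \<Rightarrow> 'q"
  assumes ind: "indep_vars (\<lambda>_. borel) X I0"
    and gauss: "\<And>q. q \<in> I0 \<Longrightarrow> distributed M lborel (X q) std_normal_density"
    and fin: "finite I" and inj: "inj_on g I" and gI: "g ` I \<subseteq> I0"
    and pos: "0 < (\<Sum>i\<in>I. (y i)\<^sup>2)"
  shows "distributed M lborel (\<lambda>\<omega>. (\<Sum>i\<in>I. y i * X (g i) \<omega>) / sqrt (\<Sum>i\<in>I. (y i)\<^sup>2)) std_normal_density"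
proof -
  define Iy where "Iy = {i\<in>I. y i \<noteq> 0}"
  have finy: "finite Iy" using fin by (simp add: Iy_def)
  have ne: "Iy \<noteq> {}"
  proof
    assume "Iy = {}"
    then have "\<forall>i\<in>I. y i = 0" by (auto simp: Iy_def)
    then show False using pos by simp
  qed
  have s1: "(\<Sum>i\<in>I. y i * X (g i) \<omega>) = (\<Sum>i\<in>Iy. y i * X (g i) \<omega>)" for \<omega>
    by (rule sum.mono_neutral_right) (auto simp: Iy_def fin)
  have s2: "(\<Sum>i\<in>I. (y i)\<^sup>2) = (\<Sum>i\<in>Iy. (\<bar>y i\<bar>)\<^sup>2)"
    unfolding power2_abs by (rule sum.mono_neutral_right) (auto simp: Iy_def fin)
  have indy: "indep_vars (\<lambda>_. borel) (\<lambda>i \<omega>. y i * X (g i) \<omega>) Iy"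
  proof (rule indep_group[OF ind, where K="\<lambda>i. {g i}" and F="\<lambda>i f. y i * f (g i)"])
    show "\<And>l. l \<in> Iy \<Longrightarrow> {g l} \<subseteq> I0" using gI by (auto simp: Iy_def)
    show "disjoint_family_on (\<lambda>i. {g i}) Iy"
      using inj by (auto simp: disjoint_family_on_def Iy_def inj_on_def)
    show "\<And>l. l \<in> Iy \<Longrightarrow> (\<lambda>f. y l * f (g l)) \<in> borel_measurable (Pi\<^sub>M {g l} (\<lambda>_. borel))"
      by (intro borel_measurable_times measurable_const measurable_component_singleton) auto
  qed auto
  have dy: "distributed M lborel (\<lambda>\<omega>. y i * X (g i) \<omega>) (normal_density 0 \<bar>y i\<bar>)" if "i \<in> Iy" for i
  proof -
    have "g i \<in> I0" using that gI by (auto simp: Iy_def)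
    have "distributed M lborel (\<lambda>x. 0 + y i * X (g i) x) (normal_density (0 + y i * 0) (\<bar>y i\<bar> * 1))"
      by (rule normal_density_affine[OF gauss[OF \<open>g i \<in> I0\<close>]]) (use that in \<open>auto simp: Iy_def\<close>)
    then show ?thesis by simp
  qed
  have "distributed M lborel (\<lambda>\<omega>. \<Sum>i\<in>Iy. y i * X (g i) \<omega>)
      (normal_density (\<Sum>i\<in>Iy. 0) (sqrt (\<Sum>i\<in>Iy. (\<bar>y i\<bar>)\<^sup>2)))"
    by (rule sum_indep_normal[OF finy ne indy]) (use dy in \<open>auto simp: Iy_def\<close>)
  then have d: "distributed M lborel (\<lambda>\<omega>. \<Sum>i\<in>I. y i * X (g i) \<omega>) (normal_density 0 (sqrt (\<Sum>i\<in>I. (y i)\<^sup>2)))"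
    by (simp add: s1 s2)
  have "0 < sqrt (\<Sum>i\<in>I. (y i)\<^sup>2)" using pos by simp
  from normal_standard_normal_convert[OF this] d show ?thesis by simp
qed

lemma (in prob_space) class_bound:
  fixes u :: "nat \<Rightarrow> nat \<Rightarrow> 'a \<Rightarrow> real" and y :: "nat \<times> nat \<Rightarrow> real"
  assumes ind: "indep_vars (\<lambda>_. borel) (\<lambda>(t, r). u t r) (UNIV \<times> {..<m})"
    and gauss: "\<And>t r. r < m \<Longrightarrow> distributed M lborel (u t r) std_normal_density"
    and p: "1 \<le> p" "p \<le> k" and c: "c < p"
    and pos: "0 < (\<Sum>i\<in>{..<p} \<times> {..<m}. (y i)\<^sup>2)"
  shows "prob {\<omega>\<in>space M. \<not> (7/10 * real (card {j\<in>{0..k-p}. j mod p = c}) <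
              (\<Sum>j\<in>{j\<in>{0..k-p}. j mod p = c}. ((\<Sum>i\<in>{..<p} \<times> {..<m}. y i * u (k - p + fst i - j) (snd i) \<omega>)
                    / sqrt (\<Sum>i\<in>{..<p} \<times> {..<m}. (y i)\<^sup>2))\<^sup>2)
           \<and> (\<Sum>j\<in>{j\<in>{0..k-p}. j mod p = c}. ((\<Sum>i\<in>{..<p} \<times> {..<m}. y i * u (k - p + fst i - j) (snd i) \<omega>)
                    / sqrt (\<Sum>i\<in>{..<p} \<times> {..<m}. (y i)\<^sup>2))\<^sup>2)
              < 13/10 * real (card {j\<in>{0..k-p}. j mod p = c}))}
       \<le> 2 * exp (- real (card {j\<in>{0..k-p}. j mod p = c}) / 64)"
proof -
  define I where "I = {..<p} \<times> {..<m}"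
  define J where "J = {j\<in>{0..k-p}. j mod p = c}"
  define \<sigma> where "\<sigma> = sqrt (\<Sum>i\<in>I. (y i)\<^sup>2)"
  define W where "W = (\<lambda>j \<omega>. (\<Sum>i\<in>I. y i * u (k - p + fst i - j) (snd i) \<omega>) / \<sigma>)"
  define X where "X = (\<lambda>(t, r). u t r)"
  have finI: "finite I" by (simp add: I_def)
  have finJ: "finite J" by (simp add: J_def)
  have Xe: "X (t, r) = u t r" for t r by (simp add: X_def)
  have dist: "distributed M lborel (W j) std_normal_density" if "j \<in> J" for j
  proof -
    have jle: "j \<le> k - p" using that by (simp add: J_def)
    define g where "g = (\<lambda>i::nat\<times>nat. (k - p + fst i - j, snd i))"
    have "distributed M lborel (\<lambda>\<omega>. (\<Sum>i\<in>I. y i * X (g i) \<omega>) / sqrt (\<Sum>i\<in>I. (y i)\<^sup>2)) std_normal_density"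
    proof (rule lincomb_normal[OF ind[folded X_def]])
      show "\<And>q. q \<in> UNIV \<times> {..<m} \<Longrightarrow> distributed M lborel (X q) std_normal_density"
        using gauss by (auto simp: X_def)
      show "inj_on g I" using jle by (auto simp: inj_on_def g_def I_def)
      show "g ` I \<subseteq> UNIV \<times> {..<m}" by (auto simp: g_def I_def)
    qed (use finI pos in \<open>auto simp: I_def\<close>)
    then show ?thesis by (simp add: W_def \<sigma>_def g_def X_def)
  qed
  have indW: "indep_vars (\<lambda>_. borel) W J"
  proof (rule indep_group[OF ind[folded X_def], where K="\<lambda>j. (\<lambda>i. (k - p + fst i - j, snd i)) ` I"
        and F="\<lambda>j f. (\<Sum>i\<in>I. y i * f (k - p + fst i - j, snd i)) / \<sigma>"])
    show "\<And>l. l \<in> J \<Longrightarrow> (\<lambda>i. (k - p + fst i - l, snd i)) ` I \<subseteq> UNIV \<times> {..<m}"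
      by (auto simp: I_def)
    show "disjoint_family_on (\<lambda>j. (\<lambda>i. (k - p + fst i - j, snd i)) ` I) J"
    proof (unfold disjoint_family_on_def, intro ballI impI)
      fix j j' assume j: "j \<in> J" and j': "j' \<in> J" and ne: "j \<noteq> j'"
      show "(\<lambda>i. (k - p + fst i - j, snd i)) ` I \<inter> (\<lambda>i. (k - p + fst i - j', snd i)) ` I = {}"
      proof (rule ccontr)
        assume "\<not> ?thesis"
        then obtain a a' r r' where aa: "a < p" "a' < p" and eq: "k - p + a - j = k - p + a' - j'"
          by (auto simp: I_def)
        have "j \<le> k - p" "j' \<le> k - p" using j j' by (auto simp: J_def)
        with eq have sum: "a + j' = a' + j" by linarith
        have md: "j mod p = j' mod p" using j j' by (auto simp: J_def)
        show False
        proof (cases "j' \<le> j")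
          case True
          then have "p dvd (j - j')" using md by (simp add: mod_eq_dvd_iff_nat)
          moreover have "j - j' < p" "0 < j - j'" using sum aa True ne by linarith+
          ultimately show False using nat_dvd_not_less by blast
        next
          case False
          then have "p dvd (j' - j)" using md by (simp add: mod_eq_dvd_iff_nat[symmetric])
          moreover have "j' - j < p" "0 < j' - j" using sum aa False ne by linarith+
          ultimately show False using nat_dvd_not_less by blast
        qed
      qed
    qed
    show "\<And>l. l \<in> J \<Longrightarrow> (\<lambda>f. (\<Sum>i\<in>I. y i * f (k - p + fst i - l, snd i)) / \<sigma>)
        \<in> borel_measurable (Pi\<^sub>M ((\<lambda>i. (k - p + fst i - l, snd i)) ` I) (\<lambda>_. borel))"
      by (intro borel_measurable_divide borel_measurable_sum borel_measurable_times measurable_const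
          measurable_component_singleton) auto
    show "\<And>l \<omega>. l \<in> J \<Longrightarrow> W l \<omega> = (\<Sum>i\<in>I. y i * restrict (\<lambda>i. X i \<omega>) ((\<lambda>i. (k - p + fst i - l, snd i)) ` I) (k - p + fst i - l, snd i)) / \<sigma>"
      by (auto simp: W_def X_def intro!: sum.cong)
  qed
  have rv[measurable]: "\<And>j. j \<in> J \<Longrightarrow> W j \<in> borel_measurable M"
    using indW by (auto simp: indep_vars_def)
  have meas: "(\<lambda>\<omega>. \<Sum>j\<in>J. (W j \<omega>)\<^sup>2) \<in> borel_measurable M"
    by (intro borel_measurable_sum borel_measurable_power rv)
  have sA: "{\<omega>\<in>space M. 13/10 * real (card J) \<le> (\<Sum>j\<in>J. (W j \<omega>)\<^sup>2)} \<in> sets M"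
    using meas by measurable
  have sB: "{\<omega>\<in>space M. (\<Sum>j\<in>J. (W j \<omega>)\<^sup>2) \<le> 7/10 * real (card J)} \<in> sets M"
    using meas by measurable
  have "prob {\<omega>\<in>space M. \<not> (7/10 * real (card J) < (\<Sum>j\<in>J. (W j \<omega>)\<^sup>2) \<and> (\<Sum>j\<in>J. (W j \<omega>)\<^sup>2) < 13/10 * real (card J))}
      \<le> prob ({\<omega>\<in>space M. 13/10 * real (card J) \<le> (\<Sum>j\<in>J. (W j \<omega>)\<^sup>2)} \<union> {\<omega>\<in>space M. (\<Sum>j\<in>J. (W j \<omega>)\<^sup>2) \<le> 7/10 * real (card J)})"
    by (rule finite_measure_mono) (use sA sB in auto)
  also have "\<dots> \<le> prob {\<omega>\<in>space M. 13/10 * real (card J) \<le> (\<Sum>j\<in>J. (W j \<omega>)\<^sup>2)} + prob {\<omega>\<in>space M. (\<Sum>j\<in>J. (W j \<omega>)\<^sup>2) \<le> 7/10 * real (card J)}"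
    by (rule measure_Un_le[OF sA sB])
  also have "\<dots> \<le> exp (- real (card J) / 64) + exp (- real (card J) / 64)"
    by (intro add_mono chi_upper chi_lower finJ indW dist)
  finally show ?thesis by (simp add: J_def W_def \<sigma>_def I_def)
qed

lemma numeric_final:
  fixes m p k :: nat and \<delta> :: real
  assumes m: "m \<ge> 1" and p: "p \<ge> 1" and kp: "k \<ge> p"
    and d: "0 < \<delta>" "\<delta> < 1"
    and hk: "real k \<ge> real p + 128 * (real m * (real p)\<^sup>2 * ln 9 + real p * ln 2 + real p * ln (1 / \<delta>))"
  shows "28 ^ (m * p) * (2 * real p * exp (- real ((k - p + 1) div p) / 64)) \<le> \<delta>"
proof -
  define n where "n = m * p"
  define N where "N = k - p + 1"
  define X where "X = real n * ln 9 + ln 2 + ln (1 / \<delta>)"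
  have lnd: "0 < ln (1/\<delta>)" using d by simp
  have X0: "0 \<le> X" using lnd by (simp add: X_def)
  have hN: "real N \<ge> 128 * real p * X + 1"
  proof -
    have "real m * (real p)\<^sup>2 * ln 9 + real p * ln 2 + real p * ln (1 / \<delta>) = real p * X"
      by (simp add: X_def n_def power2_eq_square algebra_simps)
    then show ?thesis using hk kp by (simp add: N_def of_nat_diff)
  qed
  have divb: "real (N div p) \<ge> 128 * X - 1"
  proof -
    have "N = N div p * p + N mod p" by simp
    moreover have "N mod p < p" using p by simp
    ultimately have "real N \<le> real (N div p) * real p + real p"
      by (metis of_nat_add of_nat_mult of_nat_le_iff add_le_mono1 le_add1 less_imp_le_nat
          add_left_mono order_trans)
    then have "128 * real p * X + 1 \<le> real (N div p) * real p + real p" using hN by linarith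
    then have "(128 * X - 1) * real p \<le> real (N div p) * real p" by (simp add: algebra_simps)
    then show ?thesis using p by (simp add: mult_le_cancel_right)
  qed
  have e1: "exp (- real (N div p) / 64) \<le> exp (1/64) * exp (- 2 * X)"
  proof -
    have "exp (- real (N div p) / 64) \<le> exp (1/64 + - 2 * X)" using divb by simp
    then show ?thesis by (simp only: exp_add)
  qed
  have eX: "exp X = 9 ^ n * 2 * (1/\<delta>)"
    using d by (simp add: X_def exp_add exp_of_nat_mult)
  have e2: "exp (- 2 * X) = \<delta>\<^sup>2 / (4 * 81 ^ n)"
  proof -
    have "exp (- 2 * X) = 1 / (exp X)\<^sup>2"
      by (simp add: exp_minus power2_eq_square exp_add[symmetric] field_simps)
    also have "\<dots> = \<delta>\<^sup>2 / (4 * 81 ^ n)" unfolding eX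
      by (simp add: power_mult_distrib power_divide power2_eq_square field_simps flip: power_mult_distrib)
    finally show ?thesis .
  qed
  have expb: "exp (1/64::real) \<le> 2"
  proof -
    have "exp (1/64::real) \<le> 1 + 1/64 + (1/64)\<^sup>2" by (rule exp_bound) auto
    also have "\<dots> \<le> 2" by (simp add: power2_eq_square)
    finally show ?thesis .
  qed
  have pb: "real p * (28/81) ^ n \<le> 1"
  proof -
    have "(28/81::real) ^ n \<le> (28/81) ^ p" using m by (intro power_decreasing) (auto simp: n_def)
    moreover have "real p \<le> (81/28) ^ p"
    proof -
      have "real p \<le> 2 ^ p" using less_exp[of p] by (metis of_nat_le_iff of_nat_numeral of_nat_power less_imp_le)
      also have "(2::real) ^ p \<le> (81/28) ^ p" by (intro power_mono) auto
      finally show ?thesis .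
    qed
    ultimately have "real p * (28/81) ^ n \<le> (81/28) ^ p * (28/81) ^ p"
      by (intro mult_mono) auto
    also have "\<dots> = 1" by (simp flip: power_mult_distrib)
    finally show ?thesis .
  qed
  have "28 ^ n * (2 * real p * exp (- real (N div p) / 64)) \<le> 28 ^ n * (2 * real p * (exp (1/64) * (\<delta>\<^sup>2 / (4 * 81 ^ n))))"
    using e1 e2 by (intro mult_left_mono) auto
  also have "\<dots> = (real p * (28/81) ^ n) * exp (1/64) * \<delta>\<^sup>2 / 2"
    by (simp add: power_divide field_simps)
  also have "\<dots> \<le> 1 * 2 * \<delta>\<^sup>2 / 2"
    using pb expb by (intro divide_right_mono mult_right_mono mult_mono) auto
  also have "\<dots> \<le> \<delta>" using d by (simp add: power2_eq_square mult_left_le_one_le)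
  finally show ?thesis by (simp add: n_def N_def)
qed

lemma floor_approx_tendsto:
  "(\<lambda>n. of_int \<lfloor>a * real (Suc n)\<rfloor> / real (Suc n)) \<longlonglongrightarrow> (a::real)"
proof (rule tendsto_sandwich[where f="\<lambda>n. a - inverse (real (Suc n))" and h="\<lambda>n. a"])
  show "\<forall>\<^sub>F n in sequentially. a - inverse (real (Suc n)) \<le> of_int \<lfloor>a * real (Suc n)\<rfloor> / real (Suc n)"
  proof (intro always_eventually allI)
    fix n
    have "a * real (Suc n) - 1 \<le> of_int \<lfloor>a * real (Suc n)\<rfloor>" by linarith
    then have "(a * real (Suc n) - 1) / real (Suc n) \<le> of_int \<lfloor>a * real (Suc n)\<rfloor> / real (Suc n)"
      by (intro divide_right_mono) auto
    moreover have "a - inverse (real (Suc n)) = (a * real (Suc n) - 1) / real (Suc n)"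
      by (simp add: field_simps)
    ultimately show "a - inverse (real (Suc n)) \<le> of_int \<lfloor>a * real (Suc n)\<rfloor> / real (Suc n)"
      by simp
  qed
  show "\<forall>\<^sub>F n in sequentially. of_int \<lfloor>a * real (Suc n)\<rfloor> / real (Suc n) \<le> a"
    by (intro always_eventually allI) (simp add: field_simps)
  have "(\<lambda>n. a - inverse (real (Suc n))) \<longlonglongrightarrow> a - 0"
    by (intro tendsto_diff tendsto_const LIMSEQ_inverse_real_of_nat)
  then show "(\<lambda>n. a - inverse (real (Suc n))) \<longlonglongrightarrow> a" by simp
qed auto

lemma loewner_rat:
  fixes A :: "'i \<Rightarrow> 'i \<Rightarrow> real"
  assumes fin: "finite I"
  shows "loewner_between I c A C \<longleftrightarrow>
    (\<forall>x\<in>PiE I (\<lambda>_. \<rat>). c * (\<Sum>i\<in>I. (x i)\<^sup>2) \<le> (\<Sum>i\<in>I. \<Sum>i'\<in>I. x i * A i i' * x i') \<and>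
        (\<Sum>i\<in>I. \<Sum>i'\<in>I. x i * A i i' * x i') \<le> C * (\<Sum>i\<in>I. (x i)\<^sup>2))" (is "?L \<longleftrightarrow> ?R")
proof
  assume "?L" then show "?R"
    unfolding loewner_between_def by blast
next
  assume H: "\<forall>x\<in>PiE I (\<lambda>_. \<rat>). c * (\<Sum>i\<in>I. (x i)\<^sup>2) \<le> (\<Sum>i\<in>I. \<Sum>i'\<in>I. x i * A i i' * x i') \<and>
        (\<Sum>i\<in>I. \<Sum>i'\<in>I. x i * A i i' * x i') \<le> C * (\<Sum>i\<in>I. (x i)\<^sup>2)"
  show "loewner_between I c A C"
    unfolding loewner_between_def
  proof
    fix x :: "'i \<Rightarrow> real"
    define xs where "xs = (\<lambda>n. restrict (\<lambda>i. of_int \<lfloor>x i * real (Suc n)\<rfloor> / real (Suc n)) I)"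
    have xsQ: "xs n \<in> PiE I (\<lambda>_. \<rat>)" for n
    proof -
      have "of_int \<lfloor>x i * real (Suc n)\<rfloor> / real (Suc n) \<in> \<rat>" for i
        by (intro Rats_divide Rats_of_int Rats_of_nat)
      then show ?thesis unfolding xs_def by (intro restrict_PiE_iff[THEN iffD2]) blast
    qed
    have conv: "(\<lambda>n. xs n i) \<longlonglongrightarrow> x i" if "i \<in> I" for i
      using that floor_approx_tendsto[of "x i"] by (simp add: xs_def)
    have c1: "(\<lambda>n. \<Sum>i\<in>I. (xs n i)\<^sup>2) \<longlonglongrightarrow> (\<Sum>i\<in>I. (x i)\<^sup>2)"
      by (intro tendsto_sum tendsto_power conv)
    have c2: "(\<lambda>n. \<Sum>i\<in>I. \<Sum>i'\<in>I. xs n i * A i i' * xs n i') \<longlonglongrightarrow> (\<Sum>i\<in>I. \<Sum>i'\<in>I. x i * A i i' * x i')"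
      by (intro tendsto_sum tendsto_mult tendsto_const conv)
    have "c * (\<Sum>i\<in>I. (x i)\<^sup>2) \<le> (\<Sum>i\<in>I. \<Sum>i'\<in>I. x i * A i i' * x i')"
      by (rule LIMSEQ_le[OF tendsto_mult[OF tendsto_const c1] c2]) (use H xsQ in blast)
    moreover have "(\<Sum>i\<in>I. \<Sum>i'\<in>I. x i * A i i' * x i') \<le> C * (\<Sum>i\<in>I. (x i)\<^sup>2)"
      by (rule LIMSEQ_le[OF c2 tendsto_mult[OF tendsto_const c1]]) (use H xsQ in blast)
    ultimately show "c * (\<Sum>i\<in>I. (x i)\<^sup>2) \<le> (\<Sum>i\<in>I. \<Sum>i'\<in>I. x i * A i i' * x i') \<and>
        (\<Sum>i\<in>I. \<Sum>i'\<in>I. x i * A i i' * x i') \<le> C * (\<Sum>i\<in>I. (x i)\<^sup>2)" by blast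
  qed
qed

lemma loewner_sets:
  fixes G :: "'a \<Rightarrow> 'i \<Rightarrow> 'i \<Rightarrow> real"
  assumes fin: "finite I"
    and G: "\<And>i i'. i \<in> I \<Longrightarrow> i' \<in> I \<Longrightarrow> (\<lambda>\<omega>. G \<omega> i i') \<in> borel_measurable M"
  shows "{\<omega>\<in>space M. loewner_between I c (G \<omega>) C} \<in> sets M"
proof -
  define X0 where "X0 = PiE I (\<lambda>_::'i. \<rat>::real set)"
  have cX: "countable X0" unfolding X0_def by (intro countable_PiE fin countable_rat)
  have neX: "X0 \<noteq> {}" unfolding X0_def by (auto simp: PiE_eq_empty_iff)
  define xn where "xn = from_nat_into X0"
  have rX: "range xn = X0" unfolding xn_def by (rule range_from_nat_into[OF neX cX])
  define P where "P = (\<lambda>x \<omega>. c * (\<Sum>i\<in>I. (x i)\<^sup>2) \<le> (\<Sum>i\<in>I. \<Sum>i'\<in>I. x i * G \<omega> i i' * x i') \<and>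
        (\<Sum>i\<in>I. \<Sum>i'\<in>I. x i * G \<omega> i i' * x i') \<le> C * (\<Sum>i\<in>I. (x i)\<^sup>2))"
  have "{\<omega>\<in>space M. loewner_between I c (G \<omega>) C} = {\<omega>\<in>space M. \<forall>n. P (xn n) \<omega>}"
    unfolding loewner_rat[OF fin] P_def X0_def[symmetric] rX[symmetric] by simp
  also have "\<dots> \<in> sets M"
  proof (intro sets.sets_Collect_countable_All)
    fix n
    have [measurable]: "(\<lambda>\<omega>. \<Sum>i\<in>I. \<Sum>i'\<in>I. xn n i * G \<omega> i i' * xn n i') \<in> borel_measurable M"
      by (intro borel_measurable_sum borel_measurable_times borel_measurable_const G) auto
    show "{\<omega>\<in>space M. P (xn n) \<omega>} \<in> sets M" unfolding P_def by measurable
  qed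
  finally show ?thesis .
qed

lemma quad_gram:
  "(\<Sum>i\<in>I. \<Sum>i'\<in>I. x i * (\<Sum>j\<in>J. a i j * a i' j) * x i') = (\<Sum>j\<in>J. (\<Sum>i\<in>I. (x i::real) * a i j)\<^sup>2)"
proof -
  have "(\<Sum>j\<in>J. (\<Sum>i\<in>I. x i * a i j)\<^sup>2) = (\<Sum>j\<in>J. \<Sum>i\<in>I. \<Sum>i'\<in>I. x i * a i j * (x i' * a i' j))"
    by (simp only: power2_eq_square sum_product)
  also have "\<dots> = (\<Sum>i\<in>I. \<Sum>j\<in>J. \<Sum>i'\<in>I. x i * a i j * (x i' * a i' j))" by (rule sum.swap)
  also have "\<dots> = (\<Sum>i\<in>I. \<Sum>i'\<in>I. \<Sum>j\<in>J. x i * a i j * (x i' * a i' j))" by (intro sum.cong refl sum.swap)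
  also have "\<dots> = (\<Sum>i\<in>I. \<Sum>i'\<in>I. x i * (\<Sum>j\<in>J. a i j * a i' j) * x i')"
    by (intro sum.cong refl) (simp add: sum_distrib_left sum_distrib_right ac_simps)
  finally show ?thesis ..
qed

lemma bf_shift:
  fixes G :: "'i \<Rightarrow> 'i \<Rightarrow> real"
  assumes fin: "finite I"
  shows "bf (\<lambda>i i'. G i i' - c * (if i = i' then 1 else 0)) I x x
      = (\<Sum>i\<in>I. \<Sum>i'\<in>I. x i * G i i' * x i') - c * nrm I x"
proof -
  have inner: "(\<Sum>i'\<in>I. x i * (G i i' - c * (if i = i' then 1 else 0)) * x i')
      = (\<Sum>i'\<in>I. x i * G i i' * x i') - c * (x i)\<^sup>2" if "i \<in> I" for i
  proof -
    have "(\<Sum>i'\<in>I. x i * (G i i' - c * (if i = i' then 1 else 0)) * x i')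
        = (\<Sum>i'\<in>I. x i * G i i' * x i' - (if i = i' then c * (x i * x i') else 0))"
      by (intro sum.cong refl) (auto simp: algebra_simps)
    also have "\<dots> = (\<Sum>i'\<in>I. x i * G i i' * x i') - c * (x i)\<^sup>2"
      using that fin by (simp add: sum_subtractf power2_eq_square)
    finally show ?thesis .
  qed
  show ?thesis unfolding bf_def nrm_def
    by (simp add: inner sum_subtractf sum_distrib_left cong: sum.cong)
qed

lemma card_class:
  fixes p k c :: nat
  assumes "c < p" "1 \<le> p" "p \<le> k"
  shows "(k - p + 1) div p \<le> card {j\<in>{0..k-p}. j mod p = c}"
proof -
  define N where "N = k - p + 1"
  have "inj_on (\<lambda>q. q * p + c) {..<N div p}" using assms by (auto simp: inj_on_def)
  moreover have "(\<lambda>q. q * p + c) ` {..<N div p} \<subseteq> {j\<in>{0..k-p}. j mod p = c}"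
  proof
    fix j assume "j \<in> (\<lambda>q. q * p + c) ` {..<N div p}"
    then obtain q where q: "q < N div p" "j = q * p + c" by auto
    have "(q + 1) * p \<le> N div p * p" using q(1) by (intro mult_right_mono) auto
    also have "\<dots> \<le> N" by (rule div_times_less_eq_dividend)
    finally have "q * p + p \<le> k - p + 1" by (simp add: N_def algebra_simps)
    then have "j \<le> k - p" using q(2) assms by linarith
    moreover have "j mod p = c" using q(2) assms by simp
    ultimately show "j \<in> {j\<in>{0..k-p}. j mod p = c}" by simp
  qed
  ultimately have "card {..<N div p} \<le> card {j\<in>{0..k-p}. j mod p = c}"
    by (intro card_inj_on_le) auto
  then show ?thesis by (simp add: N_def)
qed

theorem mainTheorem10:
  fixes M :: "'a measure" and u :: "nat \<Rightarrow> nat \<Rightarrow> 'a \<Rightarrow> real"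
    and m p k :: nat and \<delta> :: real
  assumes "prob_space M"
    and indep: "prob_space.indep_vars M (\<lambda>_. borel) (\<lambda>(t, r). u t r) (UNIV \<times> {..<m})"
    and gauss: "\<And>t r. r < m \<Longrightarrow> distributed M lborel (u t r) (\<lambda>x. ennreal (std_normal_density x))"
    and "m \<ge> 1" and "p \<ge> 1" and "k \<ge> p"
    and "0 < \<delta>" and "\<delta> < 1"
    and "real k \<ge> real p + 128 * (real m * (real p)\<^sup>2 * ln 9 + real p * ln 2 + real p * ln (1 / \<delta>))"
  shows "measure M {\<omega> \<in> space M.
            loewner_between (rowIdx m p) ((1/2) * real (k - p + 1))
              (gramUU (\<lambda>t r. u t r \<omega>) p k) ((3/2) * real (k - p + 1))} \<ge> 1 - \<delta>"
proof -
  interpret P: prob_space M by fact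
  note m1 = \<open>m \<ge> 1\<close> and p1 = \<open>p \<ge> 1\<close> and kp = \<open>k \<ge> p\<close>
  have meas_u[measurable]: "u t r \<in> borel_measurable M" if "r < m" for t r
    using distributed_measurable[OF gauss[OF that]] by simp
  define I where "I = rowIdx m p"
  have I_eq: "I = {..<p} \<times> {..<m}" by (simp add: I_def rowIdx_def)
  have finI: "finite I" by (simp add: I_eq)
  define n where "n = m * p"
  have cardI: "card I = n" by (simp add: I_eq n_def card_cartesian_product)
  have n1: "1 \<le> n" using m1 p1 by (simp add: n_def)
  define N where "N = k - p + 1"
  obtain S0 where S0fin: "finite S0" and S0card: "real (card S0) \<le> 28 ^ n"
    and S0net: "\<And>x. nrm I x \<le> 1 \<Longrightarrow> \<exists>y\<in>S0. nrm I (\<lambda>i. x i - y i) \<le> (1/9)\<^sup>2 \<and> nrm I y \<le> (1+1/9)\<^sup>2"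
    using net_exists[OF finI cardI n1] by blast
  define S where "S = {y\<in>S0. nrm I y \<le> (1+1/9)\<^sup>2}"
  have Sfin: "finite S" using S0fin by (simp add: S_def)
  have Scard: "real (card S) \<le> 28 ^ n"
    using card_mono[OF S0fin, of S] S0card by (auto simp: S_def)
  have Snet: "\<exists>y\<in>S. nrm I (\<lambda>i. x i - y i) \<le> (1/9)\<^sup>2 \<and> nrm I y \<le> (1+1/9)\<^sup>2" if "nrm I x \<le> 1" for x
    using S0net[OF that] by (auto simp: S_def)
  define S' where "S' = {y\<in>S. 0 < nrm I y}"
  have S'fin: "finite S'" using Sfin by (simp add: S'_def)
  define Jc where "Jc = (\<lambda>c. {j\<in>{0..k-p}. j mod p = c})"
  define z where "z = (\<lambda>y j \<omega>. \<Sum>i\<in>I. y i * u (k - p + fst i - j) (snd i) \<omega>)"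
  have zm[measurable]: "z y j \<in> borel_measurable M" for y j
    unfolding z_def
    by (intro borel_measurable_sum borel_measurable_times borel_measurable_const meas_u) (auto simp: I_eq)
  define Bc where "Bc = (\<lambda>y c. {\<omega>\<in>space M. \<not> (7/10 * real (card (Jc c)) <
              (\<Sum>j\<in>Jc c. (z y j \<omega> / sqrt (nrm I y))\<^sup>2)
           \<and> (\<Sum>j\<in>Jc c. (z y j \<omega> / sqrt (nrm I y))\<^sup>2) < 13/10 * real (card (Jc c)))})"
  have Bc_sets: "Bc y c \<in> sets M" for y c
    unfolding Bc_def by measurable
  have Bc_prob: "P.prob (Bc y c) \<le> 2 * exp (- real (N div p) / 64)" if "y \<in> S'" "c < p" for y c
  proof -
    have pos: "0 < (\<Sum>i\<in>{..<p} \<times> {..<m}. (y i)\<^sup>2)" using that by (simp add: S'_def nrm_def I_eq)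
    have "P.prob (Bc y c) \<le> 2 * exp (- real (card (Jc c)) / 64)"
      using P.class_bound[OF indep gauss p1 kp \<open>c < p\<close> pos]
      by (simp add: Bc_def Jc_def z_def nrm_def I_eq)
    also have "\<dots> \<le> 2 * exp (- real (N div p) / 64)"
      using card_class[OF \<open>c < p\<close> p1 kp] by (simp add: Jc_def N_def)
    finally show ?thesis .
  qed
  define Bad where "Bad = (\<Union>y\<in>S'. \<Union>c\<in>{..<p}. Bc y c)"
  have Bad_sets: "Bad \<in> sets M" unfolding Bad_def
    using S'fin Bc_sets by (intro sets.finite_UN) auto
  have "P.prob Bad \<le> (\<Sum>y\<in>S'. P.prob (\<Union>c\<in>{..<p}. Bc y c))"
    unfolding Bad_def by (rule measure_UNION_le[OF S'fin]) (use Bc_sets in auto)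
  also have "\<dots> \<le> (\<Sum>y\<in>S'. \<Sum>c\<in>{..<p}. P.prob (Bc y c))"
    by (intro sum_mono measure_UNION_le) (use Bc_sets in auto)
  also have "\<dots> \<le> (\<Sum>y\<in>S'. \<Sum>c\<in>{..<p}. 2 * exp (- real (N div p) / 64))"
    by (intro sum_mono Bc_prob) auto
  also have "\<dots> = real (card S') * (2 * real p * exp (- real (N div p) / 64))" by simp
  also have "\<dots> \<le> 28 ^ n * (2 * real p * exp (- real (N div p) / 64))"
  proof (intro mult_right_mono)
    have "card S' \<le> card S" using Sfin by (intro card_mono) (auto simp: S'_def)
    then show "real (card S') \<le> 28 ^ n" using Scard by linarith
  qed auto
  also have "\<dots> \<le> \<delta>"
    unfolding n_def N_def by (rule numeric_final) (use assms in auto)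
  finally have probBad: "P.prob Bad \<le> \<delta>" .
  have Gm: "(\<lambda>\<omega>. gramUU (\<lambda>t r. u t r \<omega>) p k i i') \<in> borel_measurable M"
    if "i \<in> I" "i' \<in> I" for i i'
    unfolding gramUU_def toepU_def
    by (intro borel_measurable_sum borel_measurable_times meas_u) (use that in \<open>auto simp: I_eq\<close>)
  have target_sets: "{\<omega> \<in> space M. loewner_between I ((1/2) * real (k - p + 1))
              (gramUU (\<lambda>t r. u t r \<omega>) p k) ((3/2) * real (k - p + 1))} \<in> sets M"
    by (rule loewner_sets[OF finI Gm])
  have good: "loewner_between I ((1/2) * real (k - p + 1)) (gramUU (\<lambda>t r. u t r \<omega>) p k) ((3/2) * real (k - p + 1))"
    if \<omega>: "\<omega> \<in> space M" "\<omega> \<notin> Bad" for \<omega>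
  proof -
    define G where "G = gramUU (\<lambda>t r. u t r \<omega>) p k"
    define A where "A = (\<lambda>i i'. G i i' - real N * (if i = i' then 1 else 0))"
    have Gq: "(\<Sum>i\<in>I. \<Sum>i'\<in>I. x i * G i i' * x i') = (\<Sum>j\<in>{0..k-p}. (z x j \<omega>)\<^sup>2)" for x
      unfolding G_def gramUU_def toepU_def z_def
      by (rule quad_gram[where a="\<lambda>i j. u (k - p + fst i - j) (snd i) \<omega>"])
    have bfA: "bf A I x x = (\<Sum>j\<in>{0..k-p}. (z x j \<omega>)\<^sup>2) - real N * nrm I x" for x
      unfolding A_def bf_shift[OF finI] Gq ..
    have symA: "A i i' = A i' i" for i i'
      by (auto simp: A_def G_def gramUU_def mult.commute)
    have bnd: "\<bar>bf A I y y\<bar> \<le> 3/10 * real N * (1 + 1/9)\<^sup>2" if "y \<in> S" for y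
    proof (cases "nrm I y = 0")
      case True
      then have "bf A I y y = 0" by (intro bf_zero_left) (use nrm_zero[OF finI] in auto)
      then show ?thesis by simp
    next
      case False
      then have ypos: "0 < nrm I y" using nrm_nonneg[of I y] by simp
      then have yS': "y \<in> S'" using that by (simp add: S'_def)
      have ny: "nrm I y \<le> (1 + 1/9)\<^sup>2" using that by (simp add: S_def)
      have cls: "\<bar>(\<Sum>j\<in>Jc c. (z y j \<omega>)\<^sup>2) - real (card (Jc c)) * nrm I y\<bar> \<le> 3/10 * real (card (Jc c)) * nrm I y"
        if "c < p" for c
      proof -
        have "\<omega> \<notin> Bc y c" using \<omega> yS' that by (auto simp: Bad_def)
        then have h: "7/10 * real (card (Jc c)) < (\<Sum>j\<in>Jc c. (z y j \<omega> / sqrt (nrm I y))\<^sup>2)"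
            "(\<Sum>j\<in>Jc c. (z y j \<omega> / sqrt (nrm I y))\<^sup>2) < 13/10 * real (card (Jc c))"
          using \<omega> by (auto simp: Bc_def)
        have e: "(\<Sum>j\<in>Jc c. (z y j \<omega> / sqrt (nrm I y))\<^sup>2) = (\<Sum>j\<in>Jc c. (z y j \<omega>)\<^sup>2) / nrm I y"
          using ypos by (simp add: power_divide sum_divide_distrib)
        have l: "7/10 * real (card (Jc c)) * nrm I y \<le> (\<Sum>j\<in>Jc c. (z y j \<omega>)\<^sup>2)"
          using h(1) ypos unfolding e by (simp add: pos_less_divide_eq)
        have r: "(\<Sum>j\<in>Jc c. (z y j \<omega>)\<^sup>2) \<le> 13/10 * real (card (Jc c)) * nrm I y"
          using h(2) ypos unfolding e by (simp add: pos_divide_less_eq)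
        define a where "a = (\<Sum>j\<in>Jc c. (z y j \<omega>)\<^sup>2)"
        define b where "b = real (card (Jc c)) * nrm I y"
        have l': "7/10 * b \<le> a" using l by (simp add: a_def b_def mult.assoc)
        have r': "a \<le> 13/10 * b" using r by (simp add: a_def b_def mult.assoc)
        have "\<bar>a - b\<bar> \<le> 3/10 * b" using l' r' by linarith
        then show ?thesis by (simp add: a_def b_def mult.assoc)
      qed
      have grp: "(\<Sum>c\<in>{..<p}. \<Sum>j\<in>Jc c. f j) = (\<Sum>j\<in>{0..k-p}. f j)" for f :: "nat \<Rightarrow> real"
      proof -
        have "(\<lambda>j. j mod p) ` {0..k-p} \<subseteq> {..<p}" using p1 by auto
        from sum.group[OF _ _ this, of f] show ?thesis unfolding Jc_def by simp
      qed
      have cN: "(\<Sum>c\<in>{..<p}. real (card (Jc c))) = real N"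
        using grp[of "\<lambda>_. 1"] kp by (simp add: N_def)
      have "\<bar>bf A I y y\<bar> = \<bar>(\<Sum>c\<in>{..<p}. (\<Sum>j\<in>Jc c. (z y j \<omega>)\<^sup>2) - real (card (Jc c)) * nrm I y)\<bar>"
        unfolding bfA sum_subtractf grp cN[symmetric] sum_distrib_right ..
      also have "\<dots> \<le> (\<Sum>c\<in>{..<p}. \<bar>(\<Sum>j\<in>Jc c. (z y j \<omega>)\<^sup>2) - real (card (Jc c)) * nrm I y\<bar>)"
        by (rule sum_abs)
      also have "\<dots> \<le> (\<Sum>c\<in>{..<p}. 3/10 * real (card (Jc c)) * nrm I y)"
        by (intro sum_mono cls) auto
      also have "\<dots> = 3/10 * real N * nrm I y"
        unfolding cN[symmetric] by (simp add: sum_distrib_left sum_distrib_right)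
      also have "\<dots> \<le> 3/10 * real N * (1 + 1/9)\<^sup>2"
        using ny by (intro mult_left_mono) auto
      finally show ?thesis .
    qed
    have main: "\<bar>bf A I x x\<bar> \<le> (3/10 * real N * (1 + 1/9)\<^sup>2) / (1 - 2*(1/9) - (1/9)\<^sup>2) * nrm I x" for x
      by (rule net_lemma[OF finI symA _ _ Snet bnd]) (auto simp: power2_eq_square)
    have c: "(3/10 * real N * (1 + 1/9)\<^sup>2) / (1 - 2*(1/9) - (1/9)\<^sup>2) = 30/62 * real N"
      by (simp add: power2_eq_square)
    show ?thesis unfolding loewner_between_def G_def[symmetric]
    proof
      fix x :: "nat \<times> nat \<Rightarrow> real"
      define q where "q = (\<Sum>i\<in>I. \<Sum>i'\<in>I. x i * G i i' * x i')"
      define w where "w = real N * nrm I x"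
      have w0: "0 \<le> w" using nrm_nonneg[of I x] by (simp add: w_def)
      have "\<bar>q - w\<bar> \<le> 30/62 * w"
        using main[of x] unfolding c bfA Gq q_def w_def by (simp add: mult.assoc)
      then have h: "1/2 * w \<le> q \<and> q \<le> 3/2 * w" using w0 by linarith
      have e1: "1/2 * real (k - p + 1) * (\<Sum>i\<in>I. (x i)\<^sup>2) = 1/2 * w"
        by (simp add: w_def N_def nrm_def)
      have e2: "3/2 * real (k - p + 1) * (\<Sum>i\<in>I. (x i)\<^sup>2) = 3/2 * w"
        by (simp add: w_def N_def nrm_def)
      show "1/2 * real (k - p + 1) * (\<Sum>i\<in>I. (x i)\<^sup>2) \<le> (\<Sum>i\<in>I. \<Sum>i'\<in>I. x i * G i i' * x i') \<and>
          (\<Sum>i\<in>I. \<Sum>i'\<in>I. x i * G i i' * x i') \<le> 3/2 * real (k - p + 1) * (\<Sum>i\<in>I. (x i)\<^sup>2)"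
        unfolding e1 e2 q_def[symmetric] by (rule h)
    qed
  qed
  have "1 - \<delta> \<le> 1 - P.prob Bad" using probBad by simp
  also have "\<dots> = P.prob (space M - Bad)" by (rule P.prob_compl[OF Bad_sets, symmetric])
  also have "\<dots> \<le> measure M {\<omega> \<in> space M. loewner_between I ((1/2) * real (k - p + 1))
              (gramUU (\<lambda>t r. u t r \<omega>) p k) ((3/2) * real (k - p + 1))}"
    by (rule P.finite_measure_mono[OF _ target_sets]) (use good in auto)
  finally show ?thesis by (simp add: I_def)
qed

end
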